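(* Let $n\ge 1$ and let $B=(b_{st})$ be an $n\times n$ symmetric matrix over the complex numbers. For $1\le i,j\le n$ let $B_{[ij]}=(b^{ij}_{st})$ be the $n\times n$ matrix with $b^{ij}_{st}=b_{st}$ if $(s,t)\ne(i,j)$ and $(s,t)\ne(j,i)$, and $b^{ij}_{st}=0$ otherwise. For $i<j$ let $B^{i,j}_{i,j}$ denote the $(n-2)\times(n-2)$ submatrix of $B$ obtained by deleting rows $i,j$ and columns $i,j$. Then $$\frac{1}{2}(n^2-n)\,d_2(B)=\sum_{1\le i\le j\le n} d_2(B_{[ij]})+\sum_{1\le i<j\le n} b_{ij}^2\, d_2(B^{i,j}_{i,j}).$$
   Context: For an $n\times n$ matrix $M=(m_{ij})$ ($n\ge 2$), the second immanant is $d_2(M)=\sum_{\sigma\in S_n}\chi_2(\sigma)\prod_{s=1}^n m_{s\sigma(s)}$, where $\chi_2$ is the irreducible character of the symmetric group $S_n$ corresponding to the partition $(2,1^{n-2})$. It satisfies $d_2(X)=\sum_{i=1}^k x_{ii}\det(X(i))-\det(X)$ for a $k\times k$ matrix $X$, where $X(i)$ is $X$ with row and column $i$ deleted; for matrices of order less than $2$, $d_2$ is understood via this identity, with the determinant of the empty ($0\times 0$) matrix equal to $1$. *)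

theory Defs
  imports "Jordan_Normal_Form.Determinant" Complex_Main
begin

text \<open>The irreducible character of S_n for the partition (2,1^(n-2)):
  chi_2(sigma) = sgn(sigma) * (number of fixed points of sigma - 1),
  i.e. the sign character times the standard character chi_(n-1,1).\<close>
definition chi2 :: "nat \<Rightarrow> (nat \<Rightarrow> nat) \<Rightarrow> int" where
  "chi2 n p = sign p * (int (card {i \<in> {0..<n}. p i = i}) - 1)"

text \<open>The second immanant d_2 of a square matrix (for dimension 0 and 1 this
  agrees with the identity d_2(X) = sum_i x_ii det X(i) - det X,
  giving d_2 = -1 for the empty matrix and 0 for 1x1 matrices).\<close>
definition d2 :: "'a :: comm_ring_1 mat \<Rightarrow> 'a" where
  "d2 A = (\<Sum>p \<in> {p. p permutes {0..<dim_row A}}.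
      of_int (chi2 (dim_row A) p) * (\<Prod>s = 0..<dim_row A. A $$ (s, p s)))"

definition zero_pair :: "'a :: zero mat \<Rightarrow> nat \<Rightarrow> nat \<Rightarrow> 'a mat" where
  "zero_pair B i j = mat (dim_row B) (dim_col B)
     (\<lambda>(s,t). if (s,t) = (i,j) \<or> (s,t) = (j,i) then 0 else B $$ (s,t))"

text \<open>For i < j: delete rows i,j and columns i,j (after deleting i, index j becomes j-1).\<close>
definition del2 :: "'a mat \<Rightarrow> nat \<Rightarrow> nat \<Rightarrow> 'a mat" where
  "del2 B i j = mat_delete (mat_delete B i i) (j - 1) (j - 1)"

end

theory Submission
  imports Defs
begin


lemma count_lemma:
  fixes \<sigma> :: "nat \<Rightarrow> nat"
  assumes perm: "\<sigma> permutes {0..<n}"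
  shows "card {(i,j). i \<le> j \<and> j < n \<and> (\<sigma> i = j \<or> \<sigma> j = i)}
       + card {(i,j). i < j \<and> j < n \<and> \<sigma> i = j \<and> \<sigma> j = i} = n"
proof -
  define U where "U = {(i,j). i \<le> j \<and> j < n \<and> (\<sigma> i = j \<or> \<sigma> j = i)}"
  define S where "S = {(i,j). i < j \<and> j < n \<and> \<sigma> i = j \<and> \<sigma> j = i}"
  define F where "F = (\<lambda>(i::nat,j::nat). {s. s < n \<and> ((s = i \<and> \<sigma> i = j) \<or> (s = j \<and> \<sigma> j = i))})"
  have inS: "\<And>s. s < n \<Longrightarrow> \<sigma> s < n" using permutes_in_image[OF perm] by auto
  have finU: "finite U" by (rule finite_subset[of _ "{0..<n} \<times> {0..<n}"]) (auto simp: U_def)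
  have SU: "S \<subseteq> U" by (auto simp: S_def U_def)
  have un: "\<Union>(F ` U) = {0..<n}"
  proof (rule equalityI)
    show "\<Union>(F ` U) \<subseteq> {0..<n}" by (auto simp: F_def)
  next
    show "{0..<n} \<subseteq> \<Union>(F ` U)"
    proof
    fix s assume s: "s \<in> {0..<n}"
    show "s \<in> \<Union>(F ` U)"
    proof (cases "s \<le> \<sigma> s")
      case True
      then have "(s, \<sigma> s) \<in> U" using s inS by (auto simp: U_def)
      moreover have "s \<in> F (s, \<sigma> s)" using s by (auto simp: F_def)
      ultimately show ?thesis by blast
    next
      case False
      then have "(\<sigma> s, s) \<in> U" using s inS by (auto simp: U_def)
      moreover have "s \<in> F (\<sigma> s, s)" using s by (auto simp: F_def)
      ultimately show ?thesis by blast
    qed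
    qed
  qed
  have disj: "\<forall>u\<in>U. \<forall>v\<in>U. u \<noteq> v \<longrightarrow> F u \<inter> F v = {}"
    by (auto simp: U_def F_def)
  have "n = card (\<Union>(F ` U))" using un by simp
  also have "\<dots> = (\<Sum>u\<in>U. card (F u))"
    by (rule card_UN_disjoint[OF finU _ disj]) (auto simp: F_def)
  also have "\<dots> = (\<Sum>u\<in>U. 1 + (if u \<in> S then 1 else 0))"
  proof (rule sum.cong[OF refl])
    fix u assume "u \<in> U"
    then obtain i j where u: "u = (i,j)" "i \<le> j" "j < n" "\<sigma> i = j \<or> \<sigma> j = i" by (auto simp: U_def)
    show "card (F u) = 1 + (if u \<in> S then 1 else 0)"
    proof (cases "i = j")
      case True
      then have "F u = {i}" using u by (auto simp: F_def)
      then show ?thesis using True u by (auto simp: S_def)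
    next
      case False
      show ?thesis
      proof (cases "\<sigma> i = j \<and> \<sigma> j = i")
        case True
        then have "F u = {i, j}" using u by (auto simp: F_def)
        then show ?thesis using True False u by (auto simp: S_def)
      next
        case nb: False
        show ?thesis
        proof (cases "\<sigma> i = j")
          case True
          then have "F u = {i}" using u nb by (auto simp: F_def)
          then show ?thesis using nb u by (auto simp: S_def)
        next
          case ff: False
          then have "F u = {j}" using u nb by (auto simp: F_def)
          then show ?thesis using nb u by (auto simp: S_def)
        qed
      qed
    qed
  qed
  also have "\<dots> = (\<Sum>u\<in>U. 1) + (\<Sum>u\<in>U. if u \<in> S then 1 else 0)"
    by (rule sum.distrib)
  also have "(\<Sum>u\<in>U. if u \<in> S then 1 else 0) = (\<Sum>u\<in>{u\<in>U. u \<in> S}. (1::nat))"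
    using finU by (simp only: sum.inter_filter)
  also have "{u\<in>U. u \<in> S} = S" using SU by auto
  finally have "n = card U + card S" by simp
  then show ?thesis unfolding U_def S_def by simp
qed



lemma zero_pair_lemma:
  fixes B :: "'a::comm_ring_1 mat"
  assumes B: "B \<in> carrier_mat n n" and ij: "i < n" "j < n"
  shows "d2 (zero_pair B i j) = (\<Sum>\<sigma>\<in>{p. p permutes {0..<n}}.
      if \<sigma> i = j \<or> \<sigma> j = i then 0 else of_int (chi2 n \<sigma>) * (\<Prod>s = 0..<n. B $$ (s, \<sigma> s)))"
proof -
  have dim: "dim_row (zero_pair B i j) = n" using B by (simp add: zero_pair_def)
  show ?thesis unfolding d2_def dim
  proof (rule sum.cong[OF refl])
    fix \<sigma> assume "\<sigma> \<in> {p. p permutes {0..<n}}"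
    then have perm: "\<sigma> permutes {0..<n}" by simp
    have inS: "\<And>s. s < n \<Longrightarrow> \<sigma> s < n" using permutes_in_image[OF perm] by auto
    have ent: "\<And>s. s < n \<Longrightarrow> zero_pair B i j $$ (s, \<sigma> s) =
       (if (s, \<sigma> s) = (i,j) \<or> (s, \<sigma> s) = (j,i) then 0 else B $$ (s, \<sigma> s))"
      using B inS by (simp add: zero_pair_def)
    show "of_int (chi2 n \<sigma>) * (\<Prod>s = 0..<n. zero_pair B i j $$ (s, \<sigma> s)) =
      (if \<sigma> i = j \<or> \<sigma> j = i then 0 else of_int (chi2 n \<sigma>) * (\<Prod>s = 0..<n. B $$ (s, \<sigma> s)))"
    proof (cases "\<sigma> i = j \<or> \<sigma> j = i")
      case True
      have "\<exists>s\<in>{0..<n}. zero_pair B i j $$ (s, \<sigma> s) = 0"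
      proof (cases "\<sigma> i = j")
        case True
        then show ?thesis using ent[OF ij(1)] ij by (intro bexI[of _ i]) auto
      next
        case False
        then have "\<sigma> j = i" using \<open>\<sigma> i = j \<or> \<sigma> j = i\<close> by simp
        then show ?thesis using ent[OF ij(2)] ij by (intro bexI[of _ j]) auto
      qed
      then have "(\<Prod>s = 0..<n. zero_pair B i j $$ (s, \<sigma> s)) = 0"
        by (intro prod_zero) simp_all
      then show ?thesis using True by simp
    next
      case False
      have "(\<Prod>s = 0..<n. zero_pair B i j $$ (s, \<sigma> s)) = (\<Prod>s = 0..<n. B $$ (s, \<sigma> s))"
        using ent False by (intro prod.cong) auto
      then show ?thesis using False by simp
    qed
  qed
qed



lemma del2_lemma:
  fixes B :: "'a::comm_ring_1 mat"
  assumes B: "B \<in> carrier_mat n n" and ij: "i < j" "j < n"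
    and sym: "transpose_mat B = B"
  shows "(B $$ (i,j))^2 * d2 (del2 B i j) = - (\<Sum>sig\<in>{p. p permutes {0..<n}}.
      if sig i = j \<and> sig j = i then of_int (chi2 n sig) * (\<Prod>s = 0..<n. B $$ (s, sig s)) else 0)"
proof -
  define m where "m = n - 2"
  have nm: "n = Suc (Suc m)" using ij unfolding m_def by arith
  define e where "e = (\<lambda>s::nat. if s < i then s else if Suc s < j then Suc s else Suc (Suc s))"
  define E where "E = (\<lambda>s. if s < m then e s else if s = m then i else if s = Suc m then j else s)"
  define t where "t = Transposition.transpose m (Suc m)"
  define phi where "phi = (\<lambda>tau::nat\<Rightarrow>nat. E \<circ> (tau \<circ> t) \<circ> Hilbert_Choice.inv E)"
  define psi where "psi = (\<lambda>sig::nat\<Rightarrow>nat. Hilbert_Choice.inv E \<circ> sig \<circ> E \<circ> t)"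
  define trm where "trm = (\<lambda>sig. of_int (chi2 n sig) * (\<Prod>s = 0..<n. B $$ (s, sig s)) :: 'a)"
  have dimD: "dim_row (del2 B i j) = m" using B by (simp add: del2_def m_def)
  have entD: "\<And>s u. s < m \<Longrightarrow> u < m \<Longrightarrow> del2 B i j $$ (s, u) = B $$ (e s, e u)"
    using B ij by (auto simp: del2_def mat_delete_def e_def m_def)
  have Esub: "E ` {0..<n} \<subseteq> {0..<n}" using ij by (auto simp: E_def e_def nm)
  have Einj: "inj_on E {0..<n}" using ij unfolding inj_on_def E_def e_def nm by auto
  have Ebij: "bij_betw E {0..<n} {0..<n}"
    using Esub Einj endo_inj_surj[of "{0..<n}" E] by (simp add: bij_betw_def)
  have Eperm: "E permutes {0..<n}"
    by (rule bij_imp_permutes[OF Ebij]) (auto simp: E_def nm)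
  have Einv: "\<And>x. E (Hilbert_Choice.inv E x) = x" "\<And>x. Hilbert_Choice.inv E (E x) = x"
    using permutes_inverses[OF Eperm] by auto
  have Em: "E m = i" "E (Suc m) = j" by (auto simp: E_def)
  have iEm: "Hilbert_Choice.inv E i = m" "Hilbert_Choice.inv E j = Suc m" using Einv(2) Em by metis+
  have tperm: "t permutes {0..<n}" unfolding t_def by (rule permutes_swap_id) (auto simp: nm)
  have Eperm': "Hilbert_Choice.inv E permutes {0..<n}" using permutes_inv[OF Eperm] .
  have finn: "finite {0..<n}" by simp
  have signE: "sign E * sign (Hilbert_Choice.inv E) = 1"
    using sign_inverse[OF permutes_imp_permutation[OF finn Eperm]] by (simp add: sign_def)
  define P where "P = {p. p permutes {0..<n}}"
  define Q where "Q = {p. p permutes {0..<m}}"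
  define Pij where "Pij = {sig\<in>P. sig i = j \<and> sig j = i}"
  have finP: "finite P" unfolding P_def by (rule finite_permutations) simp
  have mn: "{0..<m} \<subseteq> {0..<n}" using nm by auto
  have phiQ: "phi tau \<in> Pij" if tau: "tau \<in> Q" for tau
  proof -
    have tp: "tau permutes {0..<n}" using tau mn permutes_subset unfolding Q_def by blast
    have "phi tau permutes {0..<n}" unfolding phi_def
      by (intro permutes_compose Eperm Eperm' tperm tp)
    moreover have "tau m = m" "tau (Suc m) = Suc m" using tau unfolding Q_def
      by (auto intro: permutes_not_in)
    ultimately show ?thesis unfolding Pij_def P_def phi_def
      using iEm Em by (auto simp: t_def)
  qed
  have psiP: "psi sig \<in> Q" if sig: "sig \<in> Pij" for sig
  proof -
    have sp: "sig permutes {0..<n}" "sig i = j" "sig j = i" using sig unfolding Pij_def P_def by auto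
    have pp: "psi sig permutes {0..<n}" unfolding psi_def
      by (intro permutes_compose Eperm Eperm' tperm sp)
    have "psi sig m = m" "psi sig (Suc m) = Suc m" unfolding psi_def
      using sp iEm Em by (auto simp: t_def)
    then have "psi sig permutes {0..<m}"
    proof (intro permutes_superset[OF pp])
      fix x assume "x \<in> {0..<n} - {0..<m}"
      then have "x = m \<or> x = Suc m" using nm by auto
      then show "psi sig x = x" using \<open>psi sig m = m\<close> \<open>psi sig (Suc m) = Suc m\<close> by auto
    qed
    then show ?thesis unfolding Q_def by simp
  qed
  have psiphi: "psi (phi tau) = tau" for tau
    unfolding psi_def phi_def by (rule ext) (simp add: Einv t_def)
  have phipsi: "phi (psi sig) = sig" for sig
    unfolding psi_def phi_def by (rule ext) (simp add: Einv t_def)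
  have key: "trm (phi tau) = - ((B $$ (i,j))^2 * (of_int (chi2 m tau) *
       (\<Prod>s = 0..<m. del2 B i j $$ (s, tau s))))" if tau: "tau \<in> Q" for tau
  proof -
    have tq: "tau permutes {0..<m}" using tau unfolding Q_def by simp
    have tp: "tau permutes {0..<n}" using tq mn permutes_subset by blast
    have tin: "\<And>s. s < m \<Longrightarrow> tau s < m" using permutes_in_image[OF tq] by auto
    have tout: "tau m = m" "tau (Suc m) = Suc m" using tq by (auto intro: permutes_not_in)
    define X where "X = tau \<circ> t"
    have Xp: "X permutes {0..<n}" unfolding X_def by (intro permutes_compose tp tperm)
    have phX: "phi tau = E \<circ> X \<circ> Hilbert_Choice.inv E" unfolding phi_def X_def ..
    have permE: "permutation E" "permutation (Hilbert_Choice.inv E)" "permutation X"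
      "permutation tau" "permutation t"
      using permutes_imp_permutation[OF finn] Eperm Eperm' Xp tp tperm by auto
    have sgn: "sign (phi tau) = - sign tau"
    proof -
      have "sign (phi tau) = sign E * (sign X * sign (Hilbert_Choice.inv E))"
        unfolding phX using permE
        by (simp add: sign_compose permutation_compose)
      also have "sign X = sign tau * sign t" unfolding X_def using permE by (simp add: sign_compose)
      also have "sign t = -1" unfolding t_def by (simp add: sign_swap_id)
      finally show ?thesis using signE by (simp add: algebra_simps)
    qed
    have Xv: "\<And>s. s < m \<Longrightarrow> X s = tau s" "X m = Suc m" "X (Suc m) = m"
      unfolding X_def t_def using tout by auto
    have fix1: "{k\<in>{0..<n}. phi tau k = k} = E ` {k\<in>{0..<n}. X k = k}"
    proof (rule equalityI)
      show "{k\<in>{0..<n}. phi tau k = k} \<subseteq> E ` {k\<in>{0..<n}. X k = k}"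
      proof
        fix k assume k: "k \<in> {k\<in>{0..<n}. phi tau k = k}"
        then have "E (X (Hilbert_Choice.inv E k)) = k" unfolding phX by simp
        then have "X (Hilbert_Choice.inv E k) = Hilbert_Choice.inv E k" by (metis Einv(2))
        moreover have "Hilbert_Choice.inv E k \<in> {0..<n}" using k permutes_in_image[OF Eperm'] by auto
        ultimately show "k \<in> E ` {k\<in>{0..<n}. X k = k}" using Einv(1)[of k]
          by (metis (mono_tags, lifting) image_eqI mem_Collect_eq)
      qed
    next
      show "E ` {k\<in>{0..<n}. X k = k} \<subseteq> {k\<in>{0..<n}. phi tau k = k}"
        unfolding phX using Einv permutes_in_image[OF Eperm] by auto
    qed
    have fix2: "{k\<in>{0..<n}. X k = k} = {k\<in>{0..<m}. tau k = k}"
    proof -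
      have "{k\<in>{0..<n}. X k = k} = {k\<in>{0..<m}. X k = k} \<union> {k\<in>{m, Suc m}. X k = k}"
        using nm by auto
      also have "{k\<in>{m, Suc m}. X k = k} = {}" using Xv by auto
      also have "{k\<in>{0..<m}. X k = k} = {k\<in>{0..<m}. tau k = k}" using Xv by auto
      finally show ?thesis by simp
    qed
    have cardfix: "card {k\<in>{0..<n}. phi tau k = k} = card {k\<in>{0..<m}. tau k = k}"
    proof -
      have "inj_on E {k\<in>{0..<n}. X k = k}"
        using permutes_inj[OF Eperm] by (auto intro: inj_on_subset)
      then show ?thesis unfolding fix1 fix2[symmetric] by (rule card_image)
    qed
    have chi: "chi2 n (phi tau) = - chi2 m tau"
      unfolding chi2_def sgn cardfix by simp
    have "(\<Prod>s = 0..<n. B $$ (s, phi tau s)) = (\<Prod>s = 0..<n. B $$ (E s, phi tau (E s)))"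
      using prod.reindex_bij_betw[OF Ebij, of "\<lambda>s. B $$ (s, phi tau s)"] by simp
    also have "\<dots> = (\<Prod>s = 0..<n. B $$ (E s, E (X s)))"
      unfolding phX by (simp add: Einv)
    also have "\<dots> = (\<Prod>s = 0..<m. B $$ (E s, E (X s))) * B $$ (E m, E (X m)) * B $$ (E (Suc m), E (X (Suc m)))"
      unfolding nm by simp
    also have "B $$ (E m, E (X m)) = B $$ (i,j)" using Xv Em by simp
    also have "B $$ (E (Suc m), E (X (Suc m))) = B $$ (i,j)"
    proof -
      have "B $$ (E (Suc m), E (X (Suc m))) = B $$ (j,i)" using Xv Em by simp
      also have "\<dots> = transpose_mat B $$ (j, i)" using sym by simp
      also have "\<dots> = B $$ (i,j)" using B ij by simp
      finally show ?thesis .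
    qed
    also have "(\<Prod>s = 0..<m. B $$ (E s, E (X s))) = (\<Prod>s = 0..<m. del2 B i j $$ (s, tau s))"
    proof (rule prod.cong[OF refl])
      fix s assume "s \<in> {0..<m}"
      then have s: "s < m" by simp
      show "B $$ (E s, E (X s)) = del2 B i j $$ (s, tau s)"
        using Xv(1)[OF s] tin[OF s] s entD[OF s tin[OF s]] by (simp add: E_def)
    qed
    finally have pr: "(\<Prod>s = 0..<n. B $$ (s, phi tau s)) =
        (\<Prod>s = 0..<m. del2 B i j $$ (s, tau s)) * (B $$ (i,j))^2"
      by (simp add: power2_eq_square algebra_simps)
    show ?thesis unfolding trm_def pr chi by (simp add: algebra_simps)
  qed
  have "(\<Sum>sig\<in>P. if sig i = j \<and> sig j = i then trm sig else 0) = (\<Sum>sig\<in>Pij. trm sig)"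
    unfolding Pij_def using finP by (simp add: sum.inter_filter)
  also have "\<dots> = (\<Sum>tau\<in>Q. trm (phi tau))"
    by (rule sum.reindex_bij_witness[where i=phi and j=psi]) (auto simp: psiphi phipsi phiQ psiP)
  also have "\<dots> = (\<Sum>tau\<in>Q. - ((B $$ (i,j))^2 * (of_int (chi2 m tau) *
       (\<Prod>s = 0..<m. del2 B i j $$ (s, tau s)))))"
    by (rule sum.cong[OF refl]) (rule key)
  also have "\<dots> = - ((B $$ (i,j))^2 * d2 (del2 B i j))"
    unfolding d2_def dimD Q_def by (simp add: sum_negf sum_distrib_left)
  finally show ?thesis unfolding P_def trm_def by simp
qed



lemma cardT: "2 * card {(i::nat,j). i \<le> j \<and> j < n} = n * (n + 1)"
proof (induction n)
  case 0 then show ?case by simp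
next
  case (Suc n)
  have eq: "{(i::nat,j). i \<le> j \<and> j < Suc n} = {(i,j). i \<le> j \<and> j < n} \<union> (\<lambda>i. (i,n)) ` {0..n}"
    by auto
  have fin: "finite {(i::nat,j). i \<le> j \<and> j < n}"
    by (rule finite_subset[of _ "{0..<n} \<times> {0..<n}"]) auto
  have "card {(i::nat,j). i \<le> j \<and> j < Suc n} = card {(i::nat,j). i \<le> j \<and> j < n} + card ((\<lambda>i. (i,n)) ` {0..n})"
    unfolding eq by (rule card_Un_disjoint[OF fin]) auto
  also have "card ((\<lambda>i. (i,n)) ` {0..n}) = Suc n" by (subst card_image) (auto simp: inj_on_def)
  finally show ?case using Suc by simp
qed


theorem lemma2p3:
  fixes B :: "complex mat" and n :: nat
  assumes "n \<ge> 1"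
    and "B \<in> carrier_mat n n"
    and "transpose_mat B = B"
  shows "(of_nat (n^2 - n) / 2) * d2 B =
           (\<Sum>(i,j) \<in> {(i,j). i \<le> j \<and> j < n}. d2 (zero_pair B i j))
         + (\<Sum>(i,j) \<in> {(i,j). i < j \<and> j < n}. (B $$ (i,j))^2 * d2 (del2 B i j))"
proof -
  note B = assms(2) and sym = assms(3)
  define P where "P = {p. p permutes {0..<n}}"
  define trm where "trm = (\<lambda>sig. of_int (chi2 n sig) * (\<Prod>s = 0..<n. B $$ (s, sig s)) :: complex)"
  define T where "T = {(i::nat,j). i \<le> j \<and> j < n}"
  define S0 where "S0 = {(i::nat,j). i < j \<and> j < n}"
  define Uf where "Uf = (\<lambda>sig::nat\<Rightarrow>nat. \<lambda>(i,j). sig i = j \<or> sig j = i)"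
  define Sw where "Sw = (\<lambda>sig::nat\<Rightarrow>nat. \<lambda>(i,j). sig i = j \<and> sig j = i)"
  have finP: "finite P" unfolding P_def by (rule finite_permutations) simp
  have finT: "finite T" unfolding T_def
    by (rule finite_subset[of _ "{0..<n} \<times> {0..<n}"]) auto
  have finS0: "finite S0" unfolding S0_def
    by (rule finite_subset[of _ "{0..<n} \<times> {0..<n}"]) auto
  have dB: "d2 B = (\<Sum>sig\<in>P. trm sig)" unfolding d2_def P_def trm_def using B by simp
  have R1: "(\<Sum>(i,j) \<in> T. d2 (zero_pair B i j)) =
      (\<Sum>sig\<in>P. trm sig * of_nat (card {x\<in>T. \<not> Uf sig x}))"
  proof -
    have "(\<Sum>(i,j) \<in> T. d2 (zero_pair B i j)) =
        (\<Sum>x \<in> T. \<Sum>sig\<in>P. if \<not> Uf sig x then trm sig else 0)"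
    proof (rule sum.cong[OF refl])
      fix x assume "x \<in> T"
      then obtain i j where x: "x = (i,j)" "i < n" "j < n" unfolding T_def by auto
      show "(case x of (i, j) \<Rightarrow> d2 (zero_pair B i j)) =
          (\<Sum>sig\<in>P. if \<not> Uf sig x then trm sig else 0)"
        unfolding x(1) P_def Uf_def trm_def
        by (simp only: prod.case zero_pair_lemma[OF B x(2,3)]) (intro sum.cong, auto)
    qed
    also have "\<dots> = (\<Sum>sig\<in>P. \<Sum>x \<in> T. if \<not> Uf sig x then trm sig else 0)"
      by (rule sum.swap)
    also have "\<dots> = (\<Sum>sig\<in>P. trm sig * of_nat (card {x\<in>T. \<not> Uf sig x}))"
    proof (rule sum.cong[OF refl])
      fix sig
      have "(\<Sum>x \<in> T. if \<not> Uf sig x then trm sig else 0) = (\<Sum>x \<in> {x\<in>T. \<not> Uf sig x}. trm sig)"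
        using finT by (simp only: sum.inter_filter)
      then show "(\<Sum>x \<in> T. if \<not> Uf sig x then trm sig else 0) = trm sig * of_nat (card {x\<in>T. \<not> Uf sig x})"
        by (simp add: mult.commute)
    qed
    finally show ?thesis .
  qed
  have R2: "(\<Sum>(i,j) \<in> S0. (B $$ (i,j))^2 * d2 (del2 B i j)) =
      (\<Sum>sig\<in>P. - (trm sig * of_nat (card {x\<in>S0. Sw sig x})))"
  proof -
    have "(\<Sum>(i,j) \<in> S0. (B $$ (i,j))^2 * d2 (del2 B i j)) =
        (\<Sum>x \<in> S0. - (\<Sum>sig\<in>P. if Sw sig x then trm sig else 0))"
    proof (rule sum.cong[OF refl])
      fix x assume "x \<in> S0"
      then obtain i j where x: "x = (i,j)" "i < j" "j < n" unfolding S0_def by auto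
      show "(case x of (i, j) \<Rightarrow> (B $$ (i,j))^2 * d2 (del2 B i j)) =
          - (\<Sum>sig\<in>P. if Sw sig x then trm sig else 0)"
        unfolding x(1) P_def Sw_def trm_def
        by (simp only: prod.case del2_lemma[OF B x(2,3) sym])
    qed
    also have "\<dots> = - (\<Sum>sig\<in>P. \<Sum>x \<in> S0. if Sw sig x then trm sig else 0)"
      by (simp add: sum_negf sum.swap[of _ S0])
    also have "\<dots> = - (\<Sum>sig\<in>P. trm sig * of_nat (card {x\<in>S0. Sw sig x}))"
    proof -
      have "\<And>sig. (\<Sum>x \<in> S0. if Sw sig x then trm sig else 0) = trm sig * of_nat (card {x\<in>S0. Sw sig x})"
      proof -
        fix sig
        have "(\<Sum>x \<in> S0. if Sw sig x then trm sig else 0) = (\<Sum>x \<in> {x\<in>S0. Sw sig x}. trm sig)"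
          using finS0 by (simp only: sum.inter_filter)
        then show "(\<Sum>x \<in> S0. if Sw sig x then trm sig else 0) = trm sig * of_nat (card {x\<in>S0. Sw sig x})"
          by (simp add: mult.commute)
      qed
      then show ?thesis by simp
    qed
    finally show ?thesis by (simp add: sum_negf)
  qed
  have coef: "of_nat (card {x\<in>T. \<not> Uf sig x}) - of_nat (card {x\<in>S0. Sw sig x})
        = (of_nat (card T) - of_nat n :: complex)" if sig: "sig \<in> P" for sig
  proof -
    have c: "card {(i,j). i \<le> j \<and> j < n \<and> (sig i = j \<or> sig j = i)}
       + card {(i,j). i < j \<and> j < n \<and> sig i = j \<and> sig j = i} = n"
      using count_lemma sig unfolding P_def by blast
    have e1: "{x\<in>T. Uf sig x} = {(i,j). i \<le> j \<and> j < n \<and> (sig i = j \<or> sig j = i)}"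
      unfolding T_def Uf_def by auto
    have e2: "{x\<in>S0. Sw sig x} = {(i,j). i < j \<and> j < n \<and> sig i = j \<and> sig j = i}"
      unfolding S0_def Sw_def by auto
    have "card T = card {x\<in>T. Uf sig x} + card {x\<in>T. \<not> Uf sig x}"
    proof -
      have "T = {x\<in>T. Uf sig x} \<union> {x\<in>T. \<not> Uf sig x}" by auto
      then have "card T = card ({x\<in>T. Uf sig x} \<union> {x\<in>T. \<not> Uf sig x})" by simp
      also have "\<dots> = card {x\<in>T. Uf sig x} + card {x\<in>T. \<not> Uf sig x}"
        by (rule card_Un_disjoint) (use finT in auto)
      finally show ?thesis .
    qed
    then have "card {x\<in>T. \<not> Uf sig x} + n = card T + card {x\<in>S0. Sw sig x}"
      using c unfolding e1 e2 by simp
    then have "(of_nat (card {x\<in>T. \<not> Uf sig x} + n) :: complex) = of_nat (card T + card {x\<in>S0. Sw sig x})"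
      by simp
    then show ?thesis by (simp add: algebra_simps)
  qed
  have "(\<Sum>(i,j) \<in> T. d2 (zero_pair B i j)) + (\<Sum>(i,j) \<in> S0. (B $$ (i,j))^2 * d2 (del2 B i j))
      = (\<Sum>sig\<in>P. trm sig * (of_nat (card {x\<in>T. \<not> Uf sig x}) - of_nat (card {x\<in>S0. Sw sig x})))"
    unfolding R1 R2 by (simp add: sum.distrib[symmetric] algebra_simps)
  also have "\<dots> = (\<Sum>sig\<in>P. trm sig * (of_nat (card T) - of_nat n))"
    by (rule sum.cong[OF refl]) (simp add: coef)
  also have "\<dots> = (of_nat (card T) - of_nat n) * d2 B"
    unfolding dB by (simp add: sum_distrib_right mult.commute)
  also have "(of_nat (card T) - of_nat n :: complex) = of_nat (n^2 - n) / 2"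
  proof -
    have "2 * card T = n * (n+1)" unfolding T_def by (rule cardT)
    then have "(2 * of_nat (card T) :: complex) = of_nat n * (of_nat n + 1)"
      by (metis of_nat_1 of_nat_add of_nat_mult of_nat_numeral)
    moreover have "n \<le> n^2" by (simp add: power2_eq_square)
    then have "(of_nat (n^2 - n) :: complex) = of_nat n ^ 2 - of_nat n" by (simp add: of_nat_diff)
    ultimately show ?thesis by (simp add: field_simps power2_eq_square)
  qed
  finally show ?thesis unfolding T_def S0_def by simp
qed

end
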